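(* Let $n\ge0$ be an integer, $\omega\in\mathbb{R}$ and $\theta_0\in\mathbb{T}$, with $\theta_j=\theta_0+j\omega$. Suppose that for each $0\le k\le n$, $(\Sigma_k,\theta_0)$ is a reversed $(r_k,l_k,a_k)$-system. Then for every integer $t>0$, $$\frac{|\{0\le j<t:\theta_{-j}\in\bigcup_{k=0}^n\Sigma_k\}|}{t}\le\sum_{k=0}^n\Big(\frac{l_k}{t}+\frac{l_k}{r_k+l_k}\Big)$$ and $$\frac{|\{0\le j<t:\theta_{-j}\in\bigcup_{k=0}^n\Sigma_k\}|}{t}\le\sum_{k=0}^n\frac{l_k}{m_k+l_k},\qquad m_k=\min\{a_k,r_k\}.$$
   Context: Fix $\Sigma\subset\mathbb{T}$ and the orbit $\theta_j=\theta_0+j\omega$, $j\in\mathbb{Z}$. $\Sigma$ has minimal return time $r>0$ if every maximal block of consecutive iterates outside $\Sigma$ lying between two visits to $\Sigma$ has length at least $r$; it has maximal confinement time $l>0$ if every block of consecutive iterates all lying in $\Sigma$ has length at most $l$. $(\Sigma,\theta_0)$ is a reversed $(r,l,a)$-system if $\Sigma$ has minimal return time $r$, maximal confinement time $l$, and reversed accumulation time $a\ge0$, meaning $\theta_{-i}\notin\Sigma$ for all $0\le i<a$. *)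

theory Defs
  imports Complex_Main
begin

text \<open>The circle T = R/Z is represented by [0,1); a point of T is the fractional
part of a real. The orbit is theta_j = theta_0 + j omega (mod 1), j an integer.\<close>

definition orbit :: "real \<Rightarrow> real \<Rightarrow> int \<Rightarrow> real" where
  "orbit \<theta>0 \<omega> j = frac (\<theta>0 + of_int j * \<omega>)"

definition min_return_time :: "real set \<Rightarrow> real \<Rightarrow> real \<Rightarrow> nat \<Rightarrow> bool" where
  "min_return_time \<Sigma> \<theta>0 \<omega> r \<longleftrightarrow>
     (\<forall>i j::int. i + 1 < j \<and> orbit \<theta>0 \<omega> i \<in> \<Sigma> \<and> orbit \<theta>0 \<omega> j \<in> \<Sigma> \<and>
        (\<forall>k. i < k \<and> k < j \<longrightarrow> orbit \<theta>0 \<omega> k \<notin> \<Sigma>) \<longrightarrow> int r \<le> j - i - 1)"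

definition max_confinement_time :: "real set \<Rightarrow> real \<Rightarrow> real \<Rightarrow> nat \<Rightarrow> bool" where
  "max_confinement_time \<Sigma> \<theta>0 \<omega> l \<longleftrightarrow>
     (\<forall>(i::int) (m::nat). (\<forall>k. i \<le> k \<and> k < i + int m \<longrightarrow> orbit \<theta>0 \<omega> k \<in> \<Sigma>) \<longrightarrow> m \<le> l)"

definition reversed_system :: "real set \<Rightarrow> real \<Rightarrow> real \<Rightarrow> nat \<Rightarrow> nat \<Rightarrow> nat \<Rightarrow> bool" where
  "reversed_system \<Sigma> \<theta>0 \<omega> r l a \<longleftrightarrow>
     0 < r \<and> 0 < l \<and> min_return_time \<Sigma> \<theta>0 \<omega> r \<and> max_confinement_time \<Sigma> \<theta>0 \<omega> l \<and>
     (\<forall>i::nat. i < a \<longrightarrow> orbit \<theta>0 \<omega> (- int i) \<notin> \<Sigma>)"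

end

theory Submission
  imports Defs
begin

fun cnt :: "(nat \<Rightarrow> bool) \<Rightarrow> nat \<Rightarrow> nat" where
  "cnt P 0 = 0"
| "cnt P (Suc t) = cnt P t + (if P t then 1 else 0)"

lemma cnt_card: "cnt P t = card {j \<in> {0..<t}. P j}"
proof (induction t)
  case 0 then show ?case by simp
next
  case (Suc t)
  have "{j \<in> {0..<Suc t}. P j} = {j \<in> {0..<t}. P j} \<union> (if P t then {t} else {})"
    by (auto simp: less_Suc_eq)
  then show ?case using Suc by (auto simp: card_insert_if)
qed

lemma cnt_all: "(\<And>k. s \<le> k \<Longrightarrow> k < s + q \<Longrightarrow> P k) \<Longrightarrow> cnt P (s + q) = cnt P s + q"
  by (induction q) auto

lemma cnt_none: "(\<And>k. s \<le> k \<Longrightarrow> k < s + q \<Longrightarrow> \<not> P k) \<Longrightarrow> cnt P (s + q) = cnt P s"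
  by (induction q) auto

lemma run_start: "\<exists>s\<le>(t::nat). (\<forall>k. s \<le> k \<and> k < t \<longrightarrow> P k) \<and> (s = 0 \<or> \<not> P (s - 1))"
proof (induction t)
  case 0 then show ?case by auto
next
  case (Suc t)
  then obtain s where s: "s \<le> t" "\<forall>k. s \<le> k \<and> k < t \<longrightarrow> P k" "s = 0 \<or> \<not> P (s - 1)" by blast
  show ?case
  proof (cases "P t")
    case True
    then show ?thesis using s by (intro exI[of _ s]) (auto simp: less_Suc_eq)
  next
    case False
    then show ?thesis by (intro exI[of _ "Suc t"]) auto
  qed
qed

lemma prev: "(\<forall>k<(u::nat). \<not> P k) \<or> (\<exists>p<u. P p \<and> (\<forall>k. p < k \<and> k < u \<longrightarrow> \<not> P k))"
proof (induction u)
  case 0 then show ?case by auto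
next
  case (Suc u)
  show ?case
  proof (cases "P u")
    case True then show ?thesis by (intro disjI2 exI[of _ u]) auto
  next
    case False
    with Suc show ?thesis by (auto simp: less_Suc_eq)
  qed
qed

lemma count_bound:
  fixes P :: "nat \<Rightarrow> bool"
  assumes conf: "\<And>i m. (\<And>k. i \<le> k \<Longrightarrow> k < i + m \<Longrightarrow> P k) \<Longrightarrow> m \<le> l"
    and ret: "\<And>i j. i + 1 < j \<Longrightarrow> P i \<Longrightarrow> P j \<Longrightarrow> (\<And>k. i < k \<Longrightarrow> k < j \<Longrightarrow> \<not> P k) \<Longrightarrow> r \<le> j - i - 1"
    and mr: "m \<le> r"
    and H: "\<And>s. P s \<Longrightarrow> (\<And>i. i < s \<Longrightarrow> \<not> P i) \<Longrightarrow> m * l \<le> s * l + E"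
  shows "cnt P t * (m + l) \<le> t * l + E"
proof (induction t rule: less_induct)
  case (less t)
  obtain s where s: "s \<le> t" "\<And>k. s \<le> k \<Longrightarrow> k < t \<Longrightarrow> P k" "s = 0 \<or> \<not> P (s - 1)"
    using run_start[of t P] by blast
  show ?case
  proof (cases "s = t")
    case True
    show ?thesis
    proof (cases t)
      case 0 then show ?thesis by simp
    next
      case (Suc t')
      with True s(3) have "\<not> P t'" by simp
      hence "cnt P t = cnt P t'" using Suc by simp
      moreover have "cnt P t' * (m + l) \<le> t' * l + E" using less Suc by simp
      moreover have "t' * l \<le> t * l" using Suc by simp
      ultimately show ?thesis by (metis add_le_mono1 order_trans)
    qed
  next
    case False
    define q where "q = t - s"
    have tq: "t = s + q" using s(1) by (simp add: q_def)
    have cq: "cnt P t = cnt P s + q" unfolding tq by (rule cnt_all) (use s(2) tq in auto)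
    have ql: "q \<le> l" by (rule conf[of s q]) (use s(2) tq in auto)
    have Ps: "P s" using s(2)[of s] False s(1) by simp
    have qm: "q * m \<le> l * m" using ql by simp
    from prev[of s P] show ?thesis
    proof
      assume none: "\<forall>k<s. \<not> P k"
      have c0: "cnt P s = 0" using cnt_none[of 0 s P] none by simp
      have "m * l \<le> s * l + E" using H[OF Ps] none by blast
      have e1: "cnt P t * (m + l) = q * m + q * l" using c0 cq by (simp add: algebra_simps)
      have e2: "t * l = s * l + q * l" by (simp add: tq algebra_simps)
      have e3: "l * m = m * l" by simp
      show ?thesis using e1 e2 e3 qm \<open>m * l \<le> s * l + E\<close> by linarith
    next
      assume "\<exists>p<s. P p \<and> (\<forall>k. p < k \<and> k < s \<longrightarrow> \<not> P k)"
      then obtain p where p: "p < s" "P p" "\<forall>k. p < k \<and> k < s \<longrightarrow> \<not> P k" by blast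
      have "s \<noteq> 0" using p by simp
      hence "\<not> P (s - 1)" using s(3) by simp
      hence "p \<noteq> s - 1" using p by auto
      hence ps: "p + 1 < s" using p by simp
      define d where "d = s - p - 1"
      have sd: "s = (p + 1) + d" using ps by (simp add: d_def)
      have rd: "r \<le> d" unfolding d_def by (rule ret[OF ps p(2) Ps]) (use p in auto)
      have cs: "cnt P s = cnt P (p + 1)" unfolding sd by (rule cnt_none) (use p sd in auto)
      have IH: "cnt P (p + 1) * (m + l) \<le> (p + 1) * l + E" by (rule less.IH) (use ps tq in simp)
      have "l * m \<le> l * d" using rd mr by simp
      with qm have "q * m \<le> l * d" by linarith
      have e1: "cnt P t * (m + l) = cnt P (p + 1) * (m + l) + q * m + q * l" using cs cq by (simp add: algebra_simps)
      have e2: "t * l = (p + 1) * l + l * d + q * l" by (simp add: tq sd algebra_simps)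
      show ?thesis using e1 e2 IH \<open>q * m \<le> l * d\<close> by linarith
    qed
  qed
qed

lemma per_set:
  assumes sys: "reversed_system \<Sigma> \<theta>0 \<omega> r l a" and t: "0 < t"
  shows "real (card {j \<in> {0..<t}. orbit \<theta>0 \<omega> (- int j) \<in> \<Sigma>}) / real t
           \<le> real l / real t + real l / (real r + real l)
       \<and> real (card {j \<in> {0..<t}. orbit \<theta>0 \<omega> (- int j) \<in> \<Sigma>}) / real t
           \<le> real l / (real (min a r) + real l)"
proof -
  define P where "P j = (orbit \<theta>0 \<omega> (- int j) \<in> \<Sigma>)" for j :: nat
  have rl: "0 < r" "0 < l" and mrt: "min_return_time \<Sigma> \<theta>0 \<omega> r"
    and mct: "max_confinement_time \<Sigma> \<theta>0 \<omega> l"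
    and acc: "\<And>i. i < a \<Longrightarrow> \<not> P i"
    using sys unfolding reversed_system_def P_def by auto
  have conf: "m \<le> l" if h: "\<And>k. i \<le> k \<Longrightarrow> k < i + m \<Longrightarrow> P k" for i m
  proof -
    have "\<forall>k. - (int i + int m) + 1 \<le> k \<and> k < - (int i + int m) + 1 + int m \<longrightarrow> orbit \<theta>0 \<omega> k \<in> \<Sigma>"
    proof (intro allI impI)
      fix k :: int assume k: "- (int i + int m) + 1 \<le> k \<and> k < - (int i + int m) + 1 + int m"
      have "P (nat (- k))" by (rule h) (use k in auto)
      moreover have "- int (nat (- k)) = k" using k by auto
      ultimately show "orbit \<theta>0 \<omega> k \<in> \<Sigma>" unfolding P_def by metis
    qed
    then show ?thesis using mct unfolding max_confinement_time_def by blast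
  qed
  have ret: "r \<le> j - i - 1" if h: "i + 1 < j" "P i" "P j" "\<And>k. i < k \<Longrightarrow> k < j \<Longrightarrow> \<not> P k" for i j
  proof -
    have "\<forall>k. - int j < k \<and> k < - int i \<longrightarrow> orbit \<theta>0 \<omega> k \<notin> \<Sigma>"
    proof (intro allI impI)
      fix k :: int assume k: "- int j < k \<and> k < - int i"
      have "\<not> P (nat (- k))" by (rule h(4)) (use k in auto)
      moreover have "- int (nat (- k)) = k" using k by auto
      ultimately show "orbit \<theta>0 \<omega> k \<notin> \<Sigma>" unfolding P_def by metis
    qed
    moreover have "- int j + 1 < - int i" using h by simp
    ultimately have "int r \<le> - int i - - int j - 1"
      using mrt h(2,3) unfolding min_return_time_def P_def by blast
    then show ?thesis by simp
  qed
  have cc: "card {j \<in> {0..<t}. orbit \<theta>0 \<omega> (- int j) \<in> \<Sigma>} = cnt P t"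
    by (simp add: cnt_card P_def)
  have b1: "cnt P t * (r + l) \<le> t * l + r * l"
    by (rule count_bound[where P=P and m=r and E="r * l" and l=l and r=r]) (use conf ret in auto)
  have b2: "cnt P t * (min a r + l) \<le> t * l + 0"
  proof (rule count_bound[where P=P and m="min a r" and E=0 and l=l and r=r])
    fix s assume "P s" "\<And>i. i < s \<Longrightarrow> \<not> P i"
    hence "a \<le> s" using acc by (meson not_le)
    then show "min a r * l \<le> s * l + 0" by (simp add: mult_le_mono1 min.coboundedI1)
  qed (use conf ret in auto)
  define c where "c = cnt P t"
  have tp: "(0::real) < real t" using t by simp
  have lp: "(0::real) < real l" using rl by simp
  have b1r: "real c * (real r + real l) \<le> real t * real l + real r * real l"
    using b1 unfolding c_def by (metis of_nat_add of_nat_le_iff of_nat_mult)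
  have b2r: "real c * (real (min a r) + real l) \<le> real t * real l"
    using b2 unfolding c_def by (metis add_0_right of_nat_add of_nat_le_iff of_nat_mult)
  have "real c / real t \<le> real l / real t + real l / (real r + real l)"
  proof -
    have d: "0 < real r + real l" using lp by simp
    have "real c \<le> (real t * real l + real r * real l) / (real r + real l)"
      using b1r d by (simp add: pos_le_divide_eq)
    also have "\<dots> = real t * (real l / (real r + real l)) + real l * (real r / (real r + real l))"
      by (simp add: add_divide_distrib mult.commute)
    also have "\<dots> \<le> real t * (real l / (real r + real l)) + real l"
    proof -
      have "real r / (real r + real l) \<le> 1" using d by simp
      then have "real l * (real r / (real r + real l)) \<le> real l * 1"
        using lp by (intro mult_left_mono) auto
      then show ?thesis by simp
    qed
    finally have "real c \<le> real t * (real l / (real r + real l)) + real l" .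
    then have "real c / real t \<le> (real t * (real l / (real r + real l)) + real l) / real t"
      using tp by (intro divide_right_mono) auto
    also have "\<dots> = real l / real t + real l / (real r + real l)"
      using tp by (simp add: add_divide_distrib)
    finally show ?thesis .
  qed
  moreover have "real c / real t \<le> real l / (real (min a r) + real l)"
  proof -
    have d: "0 < real (min a r) + real l" using lp by simp
    show ?thesis using b2r d tp by (simp add: divide_le_eq le_divide_eq field_simps)
  qed
  ultimately show ?thesis using cc c_def by simp
qed

theorem lemmaB2:
  fixes n :: nat and \<omega> \<theta>0 :: real and \<Sigma> :: "nat \<Rightarrow> real set"
    and r l a :: "nat \<Rightarrow> nat" and t :: nat
  assumes sys: "\<And>k. k \<le> n \<Longrightarrow> reversed_system (\<Sigma> k) \<theta>0 \<omega> (r k) (l k) (a k)"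
    and t: "0 < t"
  shows "real (card {j \<in> {0..<t}. orbit \<theta>0 \<omega> (- int j) \<in> (\<Union>k\<le>n. \<Sigma> k)}) / real t
           \<le> (\<Sum>k\<le>n. real (l k) / real t + real (l k) / (real (r k) + real (l k)))
         \<and> real (card {j \<in> {0..<t}. orbit \<theta>0 \<omega> (- int j) \<in> (\<Union>k\<le>n. \<Sigma> k)}) / real t
           \<le> (\<Sum>k\<le>n. real (l k) / (real (min (a k) (r k)) + real (l k)))"
proof -
  define C where "C k = card {j \<in> {0..<t}. orbit \<theta>0 \<omega> (- int j) \<in> \<Sigma> k}" for k
  have U: "{j \<in> {0..<t}. orbit \<theta>0 \<omega> (- int j) \<in> (\<Union>k\<le>n. \<Sigma> k)}
       = (\<Union>k\<le>n. {j \<in> {0..<t}. orbit \<theta>0 \<omega> (- int j) \<in> \<Sigma> k})" by auto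
  have "card {j \<in> {0..<t}. orbit \<theta>0 \<omega> (- int j) \<in> (\<Union>k\<le>n. \<Sigma> k)} \<le> (\<Sum>k\<le>n. C k)"
    unfolding U C_def by (rule card_UN_le) simp
  hence cu: "real (card {j \<in> {0..<t}. orbit \<theta>0 \<omega> (- int j) \<in> (\<Union>k\<le>n. \<Sigma> k)}) / real t
        \<le> (\<Sum>k\<le>n. real (C k) / real t)"
    using t by (simp add: sum_divide_distrib[symmetric] divide_right_mono flip: of_nat_sum)
  have ps: "real (C k) / real t \<le> real (l k) / real t + real (l k) / (real (r k) + real (l k))
      \<and> real (C k) / real t \<le> real (l k) / (real (min (a k) (r k)) + real (l k))" if "k \<le> n" for k
    unfolding C_def by (rule per_set[OF sys[OF that] t])
  have "(\<Sum>k\<le>n. real (C k) / real t) \<le> (\<Sum>k\<le>n. real (l k) / real t + real (l k) / (real (r k) + real (l k)))"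
    by (rule sum_mono) (use ps in auto)
  moreover have "(\<Sum>k\<le>n. real (C k) / real t) \<le> (\<Sum>k\<le>n. real (l k) / (real (min (a k) (r k)) + real (l k)))"
    by (rule sum_mono) (use ps in auto)
  ultimately show ?thesis using cu by linarith
qed

end
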